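(* Let $I$ be an open arc in $\partial\mathbb{D}$ and $\lambda\in I$. Let $v$ be a non-negative bounded function on $\partial\mathbb{D}$ which is continuous on $I$, continuously differentiable on $I\setminus\{\lambda\}$, and satisfies $v(\lambda)=0$. Then there exists an analytic function $b$ on $\mathbb{D}$ which extends continuously to $\overline{\mathbb{D}}$ and satisfies $b(\lambda)=0$ and $|b(e^{i\theta})|\ge v(e^{i\theta})$ for all $e^{i\theta}\in\partial\mathbb{D}$. *)

theory Defs
  imports "HOL-Analysis.Analysis"
begin

end

theory Submission
  imports Defs "HOL-Complex_Analysis.Complex_Analysis"
begin

lemma frac_bounds:
  fixes w :: complex and e :: real
  assumes "Re w \<ge> 0" "e > 0"
  shows "w + of_real e \<noteq> 0" "cmod (w / (w + of_real e)) \<le> 1" "Re (w / (w + of_real e)) \<ge> 0"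
    "cmod w \<ge> e \<Longrightarrow> Re (w / (w + of_real e)) \<ge> 1/4"
proof -
  obtain x y where w: "w = Complex x y" by (cases w)
  have x: "x \<ge> 0" using assms w by simp
  show ne: "w + of_real e \<noteq> 0" using x assms w by (auto simp: complex_eq_iff)
  have den: "(x+e)^2 + y^2 > 0" using x assms by (smt (verit) zero_less_power2 sum_power2_gt_zero_iff)
  have "cmod w \<le> cmod (w + of_real e)"
    unfolding w cmod_def using x assms by (auto intro!: real_sqrt_le_mono mult_mono simp: power2_eq_square)
  then show "cmod (w / (w + of_real e)) \<le> 1" using ne by (simp add: norm_divide divide_le_eq)
  have re: "Re (w / (w + of_real e)) = (x^2 + y^2 + e*x) / ((x+e)^2 + y^2)"
    unfolding w by (simp add: Re_divide power2_eq_square algebra_simps)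
  show "Re (w / (w + of_real e)) \<ge> 0" unfolding re using x assms den by (intro divide_nonneg_pos) auto
  assume "cmod w \<ge> e"
  then have "e^2 \<le> (sqrt (x^2+y^2))^2" unfolding w cmod_def using assms
    by (intro power_mono) auto
  then have "x^2 + y^2 \<ge> e^2" by simp
  moreover have "e*x \<ge> 0" using x assms by simp
  moreover have "x^2 \<ge> 0" "y^2 \<ge> 0" by simp_all
  moreover have "(x+e)^2+y^2 = e^2 + 2*(e*x) + x^2 + y^2" by (simp add: power2_eq_square algebra_simps)
  ultimately have "4*(x^2 + y^2 + e*x) \<ge> (x+e)^2 + y^2"
    by (smt (verit))
  then show "Re (w / (w + of_real e)) \<ge> 1/4" unfolding re using den by (simp add: le_divide_eq)
qed

lemma contA:
  fixes v :: "complex \<Rightarrow> real"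
  assumes lam: "t0 \<in> {a<..<b}"
    and cont: "continuous_on ((\<lambda>t. cis t) ` {a<..<b}) v"
    and vzero: "v (cis t0) = 0"
    and e: "e > 0"
  shows "\<exists>d>0. \<forall>z\<in>sphere 0 1. cmod (z - cis t0) < d \<longrightarrow> v z < e"
proof -
  have c1: "continuous_on {a<..<b} (\<lambda>t. v (cis t))"
    by (rule continuous_on_compose2[OF cont]) (auto intro: continuous_intros)
  have "isCont (\<lambda>t. v (cis t)) t0"
    using continuous_on_eq_continuous_at[of "{a<..<b}" "\<lambda>t. v (cis t)"] lam c1 by simp
  then obtain d1 where d1: "d1 > 0" "\<And>t. dist t t0 < d1 \<Longrightarrow> dist (v (cis t)) (v (cis t0)) < e"
    using e unfolding continuous_at_eps_delta by blast
  have "isCont Arg 1" by (rule continuous_at_Arg) auto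
  then obtain d2 where d2: "d2 > 0" "\<And>u. dist u 1 < d2 \<Longrightarrow> dist (Arg u) (Arg 1) < d1"
    using d1 unfolding continuous_at_eps_delta by blast
  show ?thesis
  proof (intro exI[of _ d2] conjI ballI impI d2(1))
    fix z :: complex assume z: "z \<in> sphere 0 1" "cmod (z - cis t0) < d2"
    define u where "u = z * cis (-t0)"
    have "u - 1 = (z - cis t0) * cis (-t0)" unfolding u_def
      by (simp add: algebra_simps cis_mult)
    then have "cmod (u - 1) = cmod (z - cis t0)" by (simp add: norm_mult)
    then have "\<bar>Arg u\<bar> < d1" using d2(2)[of u] z by (simp add: dist_norm)
    have nu: "cmod u = 1" using z unfolding u_def by (simp add: norm_mult)
    then have "u \<noteq> 0" by auto
    then have "cis (Arg u) = u" using nu by (simp add: cis_Arg sgn_div_norm)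
    moreover have "z = u * cis t0" unfolding u_def by (simp add: mult.assoc cis_mult)
    ultimately have "z = cis (t0 + Arg u)" by (metis cis_mult add.commute)
    then show "v z < e" using d1(2)[of "t0 + Arg u"] \<open>\<bar>Arg u\<bar> < d1\<close> vzero by (simp add: dist_real_def)
  qed
qed


theorem mainTheorem14:
  fixes v :: "complex \<Rightarrow> real" and a b t0 :: real
  assumes arc: "a < b" "b - a < 2 * pi"
    and lam: "t0 \<in> {a<..<b}"
    and nonneg: "\<forall>z\<in>sphere 0 1. v z \<ge> 0"
    and bdd: "bdd_above (v ` sphere 0 1)"
    and cont: "continuous_on ((\<lambda>t. cis t) ` {a<..<b}) v"
    and C1: "(\<lambda>t. v (cis t)) C1_differentiable_on ({a<..<b} - {t0})"
    and vzero: "v (cis t0) = 0"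
  shows "\<exists>B :: complex \<Rightarrow> complex. B holomorphic_on ball 0 1
           \<and> continuous_on (cball 0 1) B
           \<and> B (cis t0) = 0
           \<and> (\<forall>z\<in>sphere 0 1. norm (B z) \<ge> v z)"
proof -
  obtain M0 where M0: "\<And>z. z \<in> sphere 0 1 \<Longrightarrow> v z \<le> M0"
    using bdd unfolding bdd_above_def by blast
  define M where "M = max M0 0 + 1"
  have Mpos: "M > 0" and vM: "\<And>z. z \<in> sphere 0 1 \<Longrightarrow> v z < M"
    using M0 unfolding M_def by force+
  have "\<forall>n. \<exists>d>0. \<forall>z\<in>sphere 0 1. cmod (z - cis t0) < d \<longrightarrow> v z < M * (1/2)^n"
    using contA[OF lam cont vzero] Mpos by simp
  then obtain d where d: "\<And>n. d n > 0"
    "\<And>n z. z \<in> sphere 0 1 \<Longrightarrow> cmod (z - cis t0) < d n \<Longrightarrow> v z < M * (1/2)^n"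
    by metis
  define w where "w z = 1 - cis (-t0) * z" for z
  define c where "c n = 8 * M * (1/2::real)^n" for n
  define f where "f n z = of_real (c n) * (w z / (w z + of_real (d n)))" for n z
  define B where "B z = (\<Sum>n. f n z)" for z
  have wRe: "Re (w z) \<ge> 0" if "z \<in> cball 0 1" for z
  proof -
    have "Re (cis (-t0) * z) \<le> cmod (cis (-t0) * z)" by (rule complex_Re_le_cmod)
    also have "\<dots> \<le> 1" using that by (simp add: norm_mult)
    finally show ?thesis unfolding w_def by simp
  qed
  have wnorm: "cmod (w z) = cmod (z - cis t0)" for z
  proof -
    have "w z = cis (-t0) * (cis t0 - z)" unfolding w_def by (simp add: algebra_simps cis_mult)
    then show ?thesis by (simp add: norm_mult norm_minus_commute)
  qed
  have cpos: "c n > 0" for n unfolding c_def using Mpos by simp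
  have summc: "summable c" unfolding c_def
    by (intro summable_mult summable_geometric) simp
  have fnorm: "norm (f n z) \<le> c n" if "z \<in> cball 0 1" for n z
  proof -
    have "norm (f n z) = c n * norm (w z / (w z + of_real (d n)))"
      unfolding f_def by (simp only: norm_mult norm_of_real abs_of_pos[OF cpos])
    then show ?thesis using frac_bounds(2)[OF wRe[OF that] d(1)[of n]] cpos[of n]
      by (simp add: mult_left_le)
  qed
  have ne: "w z + of_real (d n) \<noteq> 0" if "z \<in> cball 0 1" for n z
    using frac_bounds(1)[OF wRe[OF that] d(1)[of n]] .
  have ulim: "uniform_limit (cball 0 1) (\<lambda>n x. \<Sum>i<n. f i x) B sequentially"
    unfolding B_def by (rule Weierstrass_m_test[OF fnorm summc])
  have part: "continuous_on (cball 0 1) (\<lambda>x. \<Sum>i<n. f i x) \<and> (\<lambda>x. \<Sum>i<n. f i x) holomorphic_on ball 0 1" for n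
  proof
    show "continuous_on (cball 0 1) (\<lambda>x. \<Sum>i<n. f i x)"
      unfolding f_def w_def using ne unfolding w_def
      by (intro continuous_intros) auto
    show "(\<lambda>x. \<Sum>i<n. f i x) holomorphic_on ball 0 1"
      unfolding f_def w_def using ne unfolding w_def
      by (intro holomorphic_intros) auto
  qed
  obtain Bc: "continuous_on (cball 0 1) B" and Bh: "B holomorphic_on ball 0 1"
    by (rule holomorphic_uniform_limit[OF _ ulim]) (use part in auto)
  have B0: "B (cis t0) = 0"
  proof -
    have "w (cis t0) = 0" unfolding w_def by (simp add: cis_mult)
    then show ?thesis unfolding B_def f_def by simp
  qed
  have ineq: "norm (B z) \<ge> v z" if z: "z \<in> sphere 0 1" for z
  proof -
    have zc: "z \<in> cball 0 1" using z by simp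
    have sf: "summable (\<lambda>n. f n z)"
      by (rule summable_comparison_test[OF _ summc]) (use fnorm[OF zc] in auto)
    have ReB: "Re (B z) = (\<Sum>n. Re (f n z))" unfolding B_def by (rule Re_suminf[OF sf])
    have sRe: "summable (\<lambda>n. Re (f n z))" by (rule summable_Re[OF sf])
    have Ref: "Re (f n z) = c n * Re (w z / (w z + of_real (d n)))" for n
      unfolding f_def by (simp only: times_complex.sel(1) Re_complex_of_real Im_complex_of_real mult_zero_left diff_0_right)
    have Renn: "Re (f n z) \<ge> 0" for n
      unfolding Ref using frac_bounds(3)[OF wRe[OF zc] d(1)[of n]] cpos[of n] by simp
    have trm: "Re (f n z) \<le> Re (B z)" for n
    proof -
      have "sum (\<lambda>n. Re (f n z)) {n} \<le> (\<Sum>n. Re (f n z))"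
        by (rule sum_le_suminf[OF sRe]) (auto intro: Renn)
      then show ?thesis unfolding ReB by simp
    qed
    have "v z \<le> Re (B z)"
    proof (cases "v z = 0")
      case True
      then show ?thesis using trm[of 0] Renn[of 0] by linarith
    next
      case False
      then have vpos: "v z > 0" using nonneg z by force
      obtain n0 where "(1/2::real)^n0 < v z / M"
        using real_arch_pow_inv[of "v z / M" "1/2"] vpos Mpos by auto
      then have ex: "M * (1/2)^n0 \<le> v z" using Mpos by (simp add: field_simps)
      define n where "n = (LEAST n. M * (1/2::real)^n \<le> v z)"
      have n1: "M * (1/2)^n \<le> v z" unfolding n_def by (rule LeastI[of _ n0], rule ex)
      have "n \<noteq> 0" using n1 vM[OF z] by (cases n) auto
      then obtain k where k: "n = Suc k" by (cases n) auto
      have "\<not> M * (1/2)^k \<le> v z" unfolding n_def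
        by (rule not_less_Least) (simp add: k n_def[symmetric])
      then have vk: "v z < M * (1/2)^k" by simp
      have "\<not> cmod (z - cis t0) < d n" using d(2)[OF z, of n] n1 by linarith
      then have "cmod (w z) \<ge> d n" unfolding wnorm by simp
      then have "Re (w z / (w z + of_real (d n))) \<ge> 1/4"
        by (rule frac_bounds(4)[OF wRe[OF zc] d(1)[of n]])
      then have "Re (f n z) \<ge> c n / 4" unfolding Ref using cpos[of n]
        by (metis mult_left_mono less_imp_le mult.commute divide_inverse inverse_eq_divide mult_1)
      moreover have "c n / 4 = M * (1/2)^k" unfolding c_def k by simp
      ultimately show ?thesis using vk trm[of n] by linarith
    qed
    then show ?thesis using complex_Re_le_cmod[of "B z"] by linarith
  qed
  show ?thesis using Bh Bc B0 ineq by blast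
qed

end
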